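(* Let $k>l\ge0$ be integers, $\xi\in\mathbb{C}$, $f:\mathbb{N}\to[0,\infty)$, and $A=\xi(a^\dagger)^ka^l+\xi^*(a^\dagger)^la^k+f(a^\dagger a)$ with domain $\mathcal{D}_0$. Assume there exist $\kappa>2$ and $N\in\mathbb{N}$ such that $f(n)\ge\kappa|\xi|n^{(k+l)/2}$ for all $n\ge N$. Then $A$ is essentially self-adjoint and bounded from below.
   Context: $\mathbb{N}=\{0,1,2,\dots\}$. $\mathcal{H}$ is a separable complex Hilbert space with orthonormal basis $(\phi_n)_{n\in\mathbb{N}}$; $\mathcal{D}_0$ is the set of finite linear combinations of the $\phi_n$. The operators $a,a^\dagger$ have domain $\mathcal{D}_0$ and act by $a\phi_n=\sqrt{n}\,\phi_{n-1}$ ($a\phi_0=0$), $a^\dagger\phi_n=\sqrt{n+1}\,\phi_{n+1}$, extended linearly. $f(a^\dagger a)$ has domain $\mathcal{D}_0$ and $f(a^\dagger a)\phi_n=f(n)\phi_n$. *)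

theory Defs
  imports Complex_Main
begin

text \<open>Concrete model: the Hilbert space H with orthonormal basis phi_n is realised
  (unitarily) as l2(N), with phi_n the n-th unit sequence. Inner product is
  antilinear in the first argument.\<close>

type_synonym vec = "nat \<Rightarrow> complex"

definition l2 :: "vec set" where
  "l2 = {x. summable (\<lambda>n. (cmod (x n))\<^sup>2)}"

definition l2_inner :: "vec \<Rightarrow> vec \<Rightarrow> complex" where
  "l2_inner x y = (\<Sum>n. cnj (x n) * y n)"

definition l2_norm :: "vec \<Rightarrow> real" where
  "l2_norm x = sqrt (\<Sum>n. (cmod (x n))\<^sup>2)"

text \<open>D0: finite linear combinations of the basis vectors = finitely supported sequences.\<close>
definition D0 :: "vec set" where
  "D0 = {x. finite {n. x n \<noteq> 0}}"

definition ann :: "vec \<Rightarrow> vec" where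
  "ann x = (\<lambda>n. complex_of_real (sqrt (real (Suc n))) * x (Suc n))"

definition cre :: "vec \<Rightarrow> vec" where
  "cre x = (\<lambda>n. if n = 0 then 0 else complex_of_real (sqrt (real n)) * x (n - 1))"

definition num_fun :: "(nat \<Rightarrow> real) \<Rightarrow> vec \<Rightarrow> vec" where
  "num_fun f x = (\<lambda>n. complex_of_real (f n) * x n)"

type_synonym lop = "vec set \<times> (vec \<Rightarrow> vec)"

definition dense_l2 :: "vec set \<Rightarrow> bool" where
  "dense_l2 D \<longleftrightarrow> D \<subseteq> l2 \<and> (\<forall>x\<in>l2. \<forall>e>0. \<exists>y\<in>D. l2_norm (x - y) < e)"

definition l2_tendsto :: "(nat \<Rightarrow> vec) \<Rightarrow> vec \<Rightarrow> bool" where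
  "l2_tendsto s x \<longleftrightarrow> ((\<lambda>j. l2_norm (s j - x)) \<longlonglongrightarrow> 0)"

definition adjoint :: "lop \<Rightarrow> lop" where
  "adjoint T =
     ({y\<in>l2. \<exists>z\<in>l2. \<forall>x\<in>fst T. l2_inner (snd T x) y = l2_inner x z},
      (\<lambda>y. THE z. z \<in> l2 \<and> (\<forall>x\<in>fst T. l2_inner (snd T x) y = l2_inner x z)))"

definition op_eq :: "lop \<Rightarrow> lop \<Rightarrow> bool" where
  "op_eq S T \<longleftrightarrow> fst S = fst T \<and> (\<forall>x\<in>fst S. snd S x = snd T x)"

definition self_adjoint :: "lop \<Rightarrow> bool" where
  "self_adjoint T \<longleftrightarrow> dense_l2 (fst T) \<and> op_eq (adjoint T) T"

definition closure_graph :: "lop \<Rightarrow> (vec \<times> vec) set" where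
  "closure_graph T = {(x, y). x \<in> l2 \<and> y \<in> l2 \<and>
     (\<exists>s. (\<forall>j. s j \<in> fst T) \<and> l2_tendsto s x \<and> l2_tendsto (\<lambda>j. snd T (s j)) y)}"

definition closable :: "lop \<Rightarrow> bool" where
  "closable T \<longleftrightarrow> (\<forall>x y y'. (x, y) \<in> closure_graph T \<longrightarrow> (x, y') \<in> closure_graph T \<longrightarrow> y = y')"

definition op_closure :: "lop \<Rightarrow> lop" where
  "op_closure T = ({x. \<exists>y. (x, y) \<in> closure_graph T},
                   (\<lambda>x. THE y. (x, y) \<in> closure_graph T))"

definition essentially_self_adjoint :: "lop \<Rightarrow> bool" where
  "essentially_self_adjoint T \<longleftrightarrow> closable T \<and> self_adjoint (op_closure T)"

definition bounded_below :: "lop \<Rightarrow> bool" where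
  "bounded_below T \<longleftrightarrow> (\<exists>c::real. \<forall>x\<in>fst T.
      l2_inner x (snd T x) \<in> \<real> \<and> Re (l2_inner x (snd T x)) \<ge> c * (l2_norm x)\<^sup>2)"

definition A_op :: "nat \<Rightarrow> nat \<Rightarrow> complex \<Rightarrow> (nat \<Rightarrow> real) \<Rightarrow> lop" where
  "A_op k l \<xi> f = (D0, (\<lambda>x. (\<lambda>n. \<xi> * ((cre ^^ k) ((ann ^^ l) x)) n
                              + cnj \<xi> * ((cre ^^ l) ((ann ^^ k) x)) n
                              + num_fun f x n)))"

end

theory Submission
  imports Defs "HOL-Analysis.Analysis"
begin

definition sb :: "(nat \<Rightarrow> complex) \<Rightarrow> nat \<Rightarrow> bool" where "sb x N \<longleftrightarrow> (\<forall>n\<ge>N. x n = 0)"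

lemma D0_sb: "x \<in> D0 \<longleftrightarrow> (\<exists>N. sb x N)"
proof
  assume "x \<in> D0"
  then obtain m where "\<forall>n\<in>{n. x n \<noteq> 0}. n < m" unfolding D0_def using finite_nat_set_iff_bounded by blast
  then have "sb x m" unfolding sb_def by force
  then show "\<exists>N. sb x N" by blast
next
  assume "\<exists>N. sb x N"
  then obtain N where "sb x N" by blast
  then have "{n. x n \<noteq> 0} \<subseteq> {..<N}" unfolding sb_def using leI by auto
  then show "x \<in> D0" unfolding D0_def using finite_subset by blast
qed

lemma sb_mono: "sb x N \<Longrightarrow> N \<le> M \<Longrightarrow> sb x M"
  unfolding sb_def by auto

lemma ip_sb: "sb x N \<Longrightarrow> l2_inner x y = (\<Sum>n<N. cnj (x n) * y n)"
  unfolding l2_inner_def by (rule suminf_finite) (auto simp: sb_def)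

lemma sq_sb: "sb x N \<Longrightarrow> (\<Sum>n. (cmod (x n))\<^sup>2) = (\<Sum>n<N. (cmod (x n))\<^sup>2)"
  by (rule suminf_finite) (auto simp: sb_def)

lemma norm_sb: "sb x N \<Longrightarrow> l2_norm x = L2_set (\<lambda>n. cmod (x n)) {..<N}"
  unfolding l2_norm_def L2_set_def by (simp add: sq_sb)

lemma sb_l2: assumes "sb x N" shows "x \<in> l2"
  unfolding l2_def
proof (intro CollectI summable_finite[of "{..<N}"])
  fix n assume "n \<notin> {..<N}"
  then have "x n = 0" using assms by (simp add: sb_def)
  then show "(cmod (x n))\<^sup>2 = 0" by simp
qed simp

lemma D0_l2: "x \<in> D0 \<Longrightarrow> x \<in> l2"
  using D0_sb sb_l2 by metis

lemma l2_summable: "x \<in> l2 \<Longrightarrow> summable (\<lambda>n. (cmod (x n))\<^sup>2)"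
  unfolding l2_def by simp

lemma l2_norm_sq: "x \<in> l2 \<Longrightarrow> (l2_norm x)\<^sup>2 = (\<Sum>n. (cmod (x n))\<^sup>2)"
  unfolding l2_norm_def by (simp add: suminf_nonneg l2_summable)

lemma l2_norm_nonneg: "x \<in> l2 \<Longrightarrow> l2_norm x \<ge> 0"
  unfolding l2_norm_def by (simp add: suminf_nonneg l2_summable)

lemma l2_partial_le: "x \<in> l2 \<Longrightarrow> (\<Sum>n<N. (cmod (x n))\<^sup>2) \<le> (l2_norm x)\<^sup>2"
  by (simp add: l2_norm_sq sum_le_suminf l2_summable)

lemma L2_le_l2norm: "x \<in> l2 \<Longrightarrow> L2_set (\<lambda>n. cmod (x n)) {..<N} \<le> l2_norm x"
proof -
  assume x: "x \<in> l2"
  have "L2_set (\<lambda>n. cmod (x n)) {..<N} = sqrt (\<Sum>n<N. (cmod (x n))\<^sup>2)" unfolding L2_set_def by simp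
  also have "\<dots> \<le> sqrt ((l2_norm x)\<^sup>2)" using l2_partial_le[OF x] real_sqrt_le_mono by blast
  also have "\<dots> = l2_norm x" using l2_norm_nonneg[OF x] by simp
  finally show ?thesis .
qed

lemma l2_bounded:
  assumes "\<And>N. (\<Sum>n<N. (cmod (x n))\<^sup>2) \<le> C"
  shows "x \<in> l2" "l2_norm x \<le> sqrt C"
proof -
  show s: "x \<in> l2" unfolding l2_def using summableI_nonneg_bounded[of "\<lambda>n. (cmod (x n))\<^sup>2" C] assms by auto
  have "(\<Sum>n. (cmod (x n))\<^sup>2) \<le> C" using suminf_le_const[OF l2_summable[OF s]] assms by blast
  then show "l2_norm x \<le> sqrt C" unfolding l2_norm_def by simp
qed


lemma cs_sb:
  assumes "sb x N" "y \<in> l2"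
  shows "cmod (l2_inner x y) \<le> l2_norm x * l2_norm y"
proof -
  have "cmod (l2_inner x y) = cmod (\<Sum>n<N. cnj (x n) * y n)" using ip_sb[OF assms(1)] by simp
  also have "\<dots> \<le> (\<Sum>n<N. cmod (cnj (x n) * y n))" by (rule norm_sum)
  also have "\<dots> = (\<Sum>n<N. \<bar>cmod (x n)\<bar> * \<bar>cmod (y n)\<bar>)" by (simp add: norm_mult)
  also have "\<dots> \<le> L2_set (\<lambda>n. cmod (x n)) {..<N} * L2_set (\<lambda>n. cmod (y n)) {..<N}" by (rule L2_set_mult_ineq)
  also have "\<dots> \<le> l2_norm x * l2_norm y"
    using norm_sb[OF assms(1)] L2_le_l2norm[OF assms(2)] by (simp add: mult_left_mono)
  finally show ?thesis .
qed

lemma l2_diff: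
  assumes "x \<in> l2" "y \<in> l2" shows "(\<lambda>n. x n - y n) \<in> l2"
proof -
  have "summable (\<lambda>n. 2 * (cmod (x n))\<^sup>2 + 2 * (cmod (y n))\<^sup>2)"
    using assms by (intro summable_add summable_mult) (auto simp: l2_summable)
  moreover have "norm ((cmod (x n - y n))\<^sup>2) \<le> 2 * (cmod (x n))\<^sup>2 + 2 * (cmod (y n))\<^sup>2" for n
  proof -
    have "cmod (x n - y n) \<le> cmod (x n) + cmod (y n)" by (rule norm_triangle_ineq4)
    then have "(cmod (x n - y n))\<^sup>2 \<le> (cmod (x n) + cmod (y n))\<^sup>2" by (simp add: power_mono)
    also have "\<dots> \<le> 2 * (cmod (x n))\<^sup>2 + 2 * (cmod (y n))\<^sup>2"
      using sum_squares_bound[of "cmod (x n)" "cmod (y n)"] unfolding power2_sum by linarith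
    finally show ?thesis by simp
  qed
  ultimately show ?thesis unfolding l2_def by (simp add: summable_comparison_test'[where N=0])
qed

lemma ip_abs_summable:
  assumes "a \<in> l2" "b \<in> l2" shows "summable (\<lambda>n. cmod (cnj (a n) * b n))"
proof -
  have "summable (\<lambda>n. (cmod (a n))\<^sup>2 + (cmod (b n))\<^sup>2)"
    using assms by (intro summable_add) (auto simp: l2_summable)
  moreover have "norm (cmod (cnj (a n) * b n)) \<le> (cmod (a n))\<^sup>2 + (cmod (b n))\<^sup>2" for n
  proof -
    have "2 * (cmod (a n) * cmod (b n)) \<le> (cmod (a n))\<^sup>2 + (cmod (b n))\<^sup>2"
      using sum_squares_bound[of "cmod (a n)" "cmod (b n)"] by (simp add: mult.assoc)
    moreover have "0 \<le> cmod (a n) * cmod (b n)" by simp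
    ultimately have "cmod (a n) * cmod (b n) \<le> (cmod (a n))\<^sup>2 + (cmod (b n))\<^sup>2" by linarith
    then show ?thesis by (simp add: norm_mult)
  qed
  ultimately show ?thesis by (simp add: summable_comparison_test'[where N=0])
qed

lemma cs_l2:
  assumes "a \<in> l2" "b \<in> l2"
  shows "cmod (l2_inner a b) \<le> l2_norm a * l2_norm b"
proof -
  have s: "summable (\<lambda>n. cmod (cnj (a n) * b n))" using ip_abs_summable[OF assms] .
  have "cmod (l2_inner a b) \<le> (\<Sum>n. cmod (cnj (a n) * b n))"
    unfolding l2_inner_def using summable_norm[OF s] by simp
  also have "\<dots> \<le> l2_norm a * l2_norm b"
  proof (rule suminf_le_const[OF s])
    fix N
    have "(\<Sum>n<N. cmod (cnj (a n) * b n)) = (\<Sum>n<N. \<bar>cmod (a n)\<bar> * \<bar>cmod (b n)\<bar>)" by (simp add: norm_mult)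
    also have "\<dots> \<le> L2_set (\<lambda>n. cmod (a n)) {..<N} * L2_set (\<lambda>n. cmod (b n)) {..<N}" by (rule L2_set_mult_ineq)
    also have "\<dots> \<le> l2_norm a * l2_norm b"
      using L2_le_l2norm[OF assms(1)] L2_le_l2norm[OF assms(2)] l2_norm_nonneg[OF assms(1)] by (intro mult_mono) auto
    finally show "(\<Sum>n<N. cmod (cnj (a n) * b n)) \<le> l2_norm a * l2_norm b" .
  qed
  finally show ?thesis .
qed

lemma ip_diff1:
  assumes "a \<in> l2" "a' \<in> l2" "b \<in> l2"
  shows "l2_inner a b - l2_inner a' b = l2_inner (\<lambda>n. a n - a' n) b"
proof -
  have "summable (\<lambda>n. cnj (a n) * b n)" using summable_norm_cancel[OF ip_abs_summable[OF assms(1,3)]] .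
  moreover have "summable (\<lambda>n. cnj (a' n) * b n)" using summable_norm_cancel[OF ip_abs_summable[OF assms(2,3)]] .
  ultimately show ?thesis unfolding l2_inner_def by (simp add: suminf_diff algebra_simps)
qed

lemma ip_cont1:
  assumes "\<And>j. a j \<in> l2" "a0 \<in> l2" "b \<in> l2" "l2_tendsto a a0"
  shows "(\<lambda>j. l2_inner (a j) b) \<longlonglongrightarrow> l2_inner a0 b"
proof -
  have t: "(\<lambda>j. l2_norm (a j - a0)) \<longlonglongrightarrow> 0" using assms(4) unfolding l2_tendsto_def .
  have "(\<lambda>j. l2_norm (a j - a0) * l2_norm b) \<longlonglongrightarrow> 0 * l2_norm b" by (intro tendsto_mult t tendsto_const)
  then have t2: "(\<lambda>j. l2_norm (a j - a0) * l2_norm b) \<longlonglongrightarrow> 0" by simp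
  have "(\<lambda>j. l2_inner (a j) b - l2_inner a0 b) \<longlonglongrightarrow> 0"
  proof (rule Lim_null_comparison[OF _ t2])
    show "\<forall>\<^sub>F j in sequentially. norm (l2_inner (a j) b - l2_inner a0 b) \<le> l2_norm (a j - a0) * l2_norm b"
    proof (rule always_eventually, rule allI)
      fix j
      have "l2_inner (a j) b - l2_inner a0 b = l2_inner (\<lambda>n. a j n - a0 n) b" using ip_diff1[OF assms(1)[of j] assms(2,3)] by simp
      also have "(\<lambda>n. a j n - a0 n) = a j - a0" by auto
      finally show "norm (l2_inner (a j) b - l2_inner a0 b) \<le> l2_norm (a j - a0) * l2_norm b"
        using cs_l2[OF l2_diff[OF assms(1)[of j] assms(2)] assms(3)] by (simp add: fun_diff_def)
    qed
  qed
  then show ?thesis by (rule LIM_zero_cancel)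
qed

lemma comp_conv:
  assumes "\<And>j. a j \<in> l2" "a0 \<in> l2" "l2_tendsto a a0"
  shows "(\<lambda>j. a j n) \<longlonglongrightarrow> a0 n"
proof -
  have t: "(\<lambda>j. l2_norm (a j - a0)) \<longlonglongrightarrow> 0" using assms(3) unfolding l2_tendsto_def .
  have "(\<lambda>j. a j n - a0 n) \<longlonglongrightarrow> 0"
  proof (rule Lim_null_comparison[OF _ t], rule always_eventually, rule allI)
    fix j
    have l: "(a j - a0) \<in> l2" using l2_diff[OF assms(1)[of j] assms(2)] by (simp add: fun_diff_def)
    have "(cmod ((a j - a0) n))\<^sup>2 \<le> (\<Sum>m<Suc n. (cmod ((a j - a0) m))\<^sup>2)"
      by (rule member_le_sum) auto
    also have "\<dots> \<le> (l2_norm (a j - a0))\<^sup>2" by (rule l2_partial_le[OF l])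
    finally have "cmod ((a j - a0) n) \<le> l2_norm (a j - a0)"
      using l2_norm_nonneg[OF l] power2_le_imp_le by blast
    then show "norm (a j n - a0 n) \<le> l2_norm (a j - a0)" by simp
  qed
  then show ?thesis by (rule LIM_zero_cancel)
qed

definition W :: "nat \<Rightarrow> nat \<Rightarrow> nat \<Rightarrow> real" where
  "W k l m = sqrt (pochhammer (real m + 1) k * pochhammer (real m + 1) l)"
definition alp :: "nat \<Rightarrow> nat \<Rightarrow> nat \<Rightarrow> real" where
  "alp k l n = (if k \<le> n then W k l (n - k) else 0)"
definition bet :: "nat \<Rightarrow> nat \<Rightarrow> nat \<Rightarrow> real" where
  "bet k l n = (if l \<le> n then W k l (n - l) else 0)"

definition Af :: "nat \<Rightarrow> nat \<Rightarrow> complex \<Rightarrow> (nat \<Rightarrow> real) \<Rightarrow> (nat \<Rightarrow> complex) \<Rightarrow> nat \<Rightarrow> complex" where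
  "Af k l \<xi> f x = (\<lambda>n. \<xi> * of_real (alp k l n) * x (n - (k - l)) + cnj \<xi> * of_real (bet k l n) * x (n + (k - l))
      + of_real (f n) * x n)"

lemma ann_pow: "(ann ^^ j) x n = complex_of_real (sqrt (pochhammer (real n + 1) j)) * x (n + j)"
proof (induction j arbitrary: n)
  case 0 then show ?case by simp
next
  case (Suc j)
  have "(ann ^^ Suc j) x n = complex_of_real (sqrt (real (Suc n))) * (ann ^^ j) x (Suc n)"
    by (simp add: ann_def)
  also have "\<dots> = complex_of_real (sqrt (real (Suc n)) * sqrt (pochhammer (real n + 1 + 1) j)) * x (n + Suc j)"
    using Suc[of "Suc n"] by (simp add: add_ac)
  also have "sqrt (real (Suc n)) * sqrt (pochhammer (real n + 1 + 1) j) = sqrt (pochhammer (real n + 1) (Suc j))"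
    by (simp add: pochhammer_rec real_sqrt_mult add_ac)
  finally show ?case .
qed

lemma cre_pow: "(cre ^^ j) x n = (if j \<le> n then complex_of_real (sqrt (pochhammer (real (n - j) + 1) j)) * x (n - j) else 0)"
proof (induction j arbitrary: n)
  case 0 then show ?case by simp
next
  case (Suc j)
  show ?case
  proof (cases n)
    case 0 then show ?thesis by (simp add: cre_def)
  next
    case (Suc m)
    have e: "(cre ^^ Suc j) x n = complex_of_real (sqrt (real (Suc m))) * (cre ^^ j) x m"
      using Suc by (simp add: cre_def)
    show ?thesis
    proof (cases "j \<le> m")
      case True
      have r: "real (m - j) + 1 + real j = real (Suc m)" using True by (simp add: of_nat_diff)
      have p: "pochhammer (real (m - j) + 1) (Suc j) = real (Suc m) * pochhammer (real (m - j) + 1) j"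
        unfolding pochhammer_rec' r ..
      have "(cre ^^ Suc j) x n = complex_of_real (sqrt (real (Suc m))) * (complex_of_real (sqrt (pochhammer (real (m - j) + 1) j)) * x (m - j))"
        using e Suc.IH[of m] True by simp
      also have "\<dots> = complex_of_real (sqrt (pochhammer (real (m - j) + 1) (Suc j))) * x (m - j)"
        unfolding p real_sqrt_mult of_real_mult by (simp only: mult.assoc)
      finally show ?thesis using True \<open>n = Suc m\<close> by simp
    next
      case False
      then show ?thesis using e Suc.IH[of m] \<open>n = Suc m\<close> by simp
    qed
  qed
qed

lemma A_op_eq:
  assumes "l < k"
  shows "fst (A_op k l \<xi> f) = D0" "snd (A_op k l \<xi> f) = Af k l \<xi> f"
proof -
  show "fst (A_op k l \<xi> f) = D0" by (simp add: A_op_def)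
  show "snd (A_op k l \<xi> f) = Af k l \<xi> f"
  proof (rule ext, rule ext)
    fix x n
    have 1: "(cre ^^ k) ((ann ^^ l) x) n = of_real (alp k l n) * x (n - (k - l))"
      using assms by (simp add: cre_pow ann_pow alp_def W_def real_sqrt_mult)
    have 2: "(cre ^^ l) ((ann ^^ k) x) n = of_real (bet k l n) * x (n + (k - l))"
      using assms by (simp add: cre_pow ann_pow bet_def W_def real_sqrt_mult mult.commute)
    show "snd (A_op k l \<xi> f) x n = Af k l \<xi> f x n"
      unfolding A_op_def Af_def num_fun_def using 1 2 by (simp add: mult.assoc)
  qed
qed

lemma alp_shift: "l < k \<Longrightarrow> alp k l (n + (k - l)) = bet k l n"
  unfolding alp_def bet_def by (auto simp: algebra_simps)

lemma alp_small: "l < k \<Longrightarrow> n < k - l \<Longrightarrow> alp k l n = 0"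
  unfolding alp_def by auto

lemma alp_nonneg: "alp k l n \<ge> 0" and bet_nonneg: "bet k l n \<ge> 0"
  unfolding alp_def bet_def W_def by (auto intro!: mult_nonneg_nonneg pochhammer_nonneg)

lemma poch_le: "pochhammer (real m + 1) j \<le> (real m + real j) ^ j"
proof -
  have "pochhammer (real m + 1) j = (\<Prod>i\<in>{0..<j}. real m + 1 + real i)" by (simp add: pochhammer_prod)
  also have "\<dots> \<le> (\<Prod>i\<in>{0..<j}. real m + real j)" by (rule prod_mono) auto
  also have "\<dots> = (real m + real j) ^ j" by simp
  finally show ?thesis .
qed

lemma W_le:
  assumes "l < k" shows "W k l m \<le> (real m + real k) powr ((real k + real l) / 2)"
proof -
  have pos: "real m + real k > 0" using assms by simp
  have a: "pochhammer (real m + 1) k \<le> (real m + real k) ^ k" by (rule poch_le)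
  have "pochhammer (real m + 1) l \<le> (real m + real l) ^ l" by (rule poch_le)
  also have "\<dots> \<le> (real m + real k) ^ l" using assms by (intro power_mono) auto
  finally have b: "pochhammer (real m + 1) l \<le> (real m + real k) ^ l" .
  have "pochhammer (real m + 1) k * pochhammer (real m + 1) l \<le> (real m + real k) ^ k * (real m + real k) ^ l"
    using a b by (intro mult_mono) (auto intro!: pochhammer_nonneg)
  also have "\<dots> = (real m + real k) ^ (k + l)" by (simp add: power_add)
  also have "\<dots> = (real m + real k) powr (real (k + l))" using pos by (rule powr_realpow[symmetric])
  also have "\<dots> = (real m + real k) powr (real k + real l)" by simp
  finally have "W k l m \<le> sqrt ((real m + real k) powr (real k + real l))"
    unfolding W_def using real_sqrt_le_mono by blast
  also have "\<dots> = (real m + real k) powr ((real k + real l) / 2)"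
    using pos by (simp add: powr_half_sqrt_powr)
  finally show ?thesis .
qed

lemma alp_le: "l < k \<Longrightarrow> alp k l n \<le> real n powr ((real k + real l) / 2)"
  unfolding alp_def using W_le[of l k "n - k"] by (auto simp: of_nat_diff)

lemma bet_le: assumes "l < k" shows "bet k l n \<le> real (n + (k - l)) powr ((real k + real l) / 2)"
proof (cases "l \<le> n")
  case True
  have e: "real (n - l) + real k = real (n + (k - l))" using True assms by (simp add: of_nat_diff)
  have "bet k l n = W k l (n - l)" using True by (simp add: bet_def)
  also have "\<dots> \<le> (real (n - l) + real k) powr ((real k + real l) / 2)" by (rule W_le[OF assms])
  finally show ?thesis unfolding e .
qed (simp add: bet_def)

locale opctx =
  fixes k l :: nat and \<xi> :: complex and f :: "nat \<Rightarrow> real" and lam th :: real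
  assumes kl: "l < k" and fnn: "\<And>n. f n \<ge> 0" and lam: "lam > 0" and th0: "th > 0" and th1: "th < 1/2"
    and ba: "\<And>n. cmod \<xi> * alp k l n \<le> th * (f n + lam)"
    and bb: "\<And>n. cmod \<xi> * bet k l n \<le> th * (f n + lam)"

lemma opctx_exists:
  fixes k l N :: nat and \<xi> :: complex and f :: "nat \<Rightarrow> real" and \<kappa> :: real
  assumes kl: "k > l"
    and fnn: "\<And>n. f n \<ge> 0"
    and ka: "\<kappa> > 2"
    and fb: "\<And>n. n \<ge> N \<Longrightarrow> f n \<ge> \<kappa> * cmod \<xi> * real n powr ((real k + real l) / 2)"
  shows "\<exists>lam th. opctx k l \<xi> f lam th"
proof -
  define p where "p = (real k + real l) / 2"
  define d where "d = real (k - l)"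
  define th where "th = (1 / \<kappa> + 1 / 2) / 2"
  define r where "r = th * \<kappa>"
  have p0: "p > 0" using kl unfolding p_def by simp
  have d0: "d \<ge> 0" unfolding d_def by simp
  have th0: "th > 0" and th1: "th < 1/2" using ka unfolding th_def by (auto simp: field_simps)
  have r1: "r > 1" using ka unfolding r_def th_def by (auto simp: field_simps)
  have "(\<lambda>n. (1 + d / real n) powr p) \<longlonglongrightarrow> (1 + 0) powr p"
    by (intro tendsto_powr tendsto_add tendsto_const lim_const_over_n) simp
  then have "(\<lambda>n. (1 + d / real n) powr p) \<longlonglongrightarrow> 1" by simp
  from order_tendstoD(2)[OF this r1] obtain N1 where N1: "\<And>n. n \<ge> N1 \<Longrightarrow> (1 + d / real n) powr p < r"
    unfolding eventually_sequentially by blast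
  define M where "M = max N N1 + 1"
  define lam where "lam = cmod \<xi> * (real M + d) powr p / th + 1"
  have lam0: "lam > 0" unfolding lam_def using th0 by (simp add: add_nonneg_pos)
  have key: "cmod \<xi> * (real n + d) powr p \<le> th * (f n + lam)" for n
  proof (cases "n < M")
    case True
    have "(real n + d) powr p \<le> (real M + d) powr p"
      using True d0 p0 by (intro powr_mono2) auto
    then have "cmod \<xi> * (real n + d) powr p \<le> cmod \<xi> * (real M + d) powr p"
      by (simp add: mult_left_mono)
    also have "\<dots> = th * (lam - 1)" unfolding lam_def using th0 by simp
    also have "\<dots> \<le> th * (f n + lam)" using th0 fnn[of n] by (intro mult_left_mono) auto
    finally show ?thesis .
  next
    case False
    then have nN: "n \<ge> N" "n \<ge> N1" "n > 0" unfolding M_def by auto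
    have "real n + d = real n * (1 + d / real n)" using nN by (simp add: field_simps)
    then have "(real n + d) powr p = real n powr p * (1 + d / real n) powr p"
      using d0 by (simp add: powr_mult)
    also have "\<dots> \<le> real n powr p * r" using N1[OF nN(2)] by (intro mult_left_mono) auto
    finally have "cmod \<xi> * (real n + d) powr p \<le> cmod \<xi> * (real n powr p * r)" by (simp add: mult_left_mono)
    also have "\<dots> = th * (\<kappa> * cmod \<xi> * real n powr p)" unfolding r_def by simp
    also have "\<dots> \<le> th * f n" using fb[OF nN(1)] th0 unfolding p_def by (intro mult_left_mono) auto
    also have "\<dots> \<le> th * (f n + lam)" using th0 lam0 by simp
    finally show ?thesis .
  qed
  have "opctx k l \<xi> f lam th"
  proof
    show "l < k" "\<And>n. f n \<ge> 0" "lam > 0" "th > 0" "th < 1/2" by (fact kl fnn lam0 th0 th1)+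
    fix n
    have "alp k l n \<le> real n powr p" using alp_le[OF kl] unfolding p_def by simp
    also have "\<dots> \<le> (real n + d) powr p" using d0 p0 by (intro powr_mono2) auto
    finally have "cmod \<xi> * alp k l n \<le> cmod \<xi> * (real n + d) powr p" by (simp add: mult_left_mono)
    then show "cmod \<xi> * alp k l n \<le> th * (f n + lam)" using key[of n] by simp
    have "bet k l n \<le> (real n + d) powr p" using bet_le[OF kl, of n] unfolding p_def d_def by simp
    then have "cmod \<xi> * bet k l n \<le> cmod \<xi> * (real n + d) powr p" by (simp add: mult_left_mono)
    then show "cmod \<xi> * bet k l n \<le> th * (f n + lam)" using key[of n] by simp
  qed
  then show ?thesis by blast
qed

lemma sum_shift_pos: fixes R d :: nat shows "(\<Sum>n<R. (if d \<le> n then h (n - d) else 0)) = (\<Sum>m<R - d. h m)"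
proof (induction R)
  case 0 then show ?case by simp
next
  case (Suc R)
  show ?case
  proof (cases "d \<le> R")
    case True
    then have "Suc R - d = Suc (R - d)" by simp
    then show ?thesis using Suc True by simp
  next
    case False
    then have "Suc R - d = 0" "R - d = 0" by auto
    then show ?thesis using Suc False by simp
  qed
qed

lemma sum_shift_neg: fixes R d :: nat shows "(\<Sum>n<R. h (n + d)) + (\<Sum>m<d. h m) = (\<Sum>m<R + d. (h m :: 'a::comm_monoid_add))"
proof (induction R)
  case 0 then show ?case by simp
next
  case (Suc R)
  have "(\<Sum>n<Suc R. h (n + d)) + (\<Sum>m<d. h m) = h (R + d) + ((\<Sum>n<R. h (n + d)) + (\<Sum>m<d. h m))"
    by (simp add: add_ac)
  also have "\<dots> = h (R + d) + (\<Sum>m<R + d. h m)" using Suc.IH by simp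
  also have "\<dots> = (\<Sum>m<Suc R + d. h m)" by (simp add: add.commute)
  finally show ?case .
qed

lemma sum_shift_neg0: fixes R d :: nat shows "(\<And>n. n < d \<Longrightarrow> h n = 0) \<Longrightarrow> (\<Sum>m<R + d. (h m :: 'a::comm_monoid_add)) = (\<Sum>n<R. h (n + d))"
  using sum_shift_neg[where R=R and d=d and h=h] by simp

lemma sum_trunc: fixes R N :: nat shows "(\<And>n. n \<ge> N \<Longrightarrow> h n = 0) \<Longrightarrow> N \<le> R \<Longrightarrow> (\<Sum>n<R. (h n :: 'a::comm_monoid_add)) = (\<Sum>n<N. h n)"
  by (rule sum.mono_neutral_right) auto

lemma sum_shift_pos_le: fixes R d :: nat shows "(\<And>m. h m \<ge> 0) \<Longrightarrow> (\<Sum>n<R. (if d \<le> n then h (n - d) else (0::real))) \<le> (\<Sum>m<R. h m)"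
  unfolding sum_shift_pos by (rule sum_mono2) auto

lemma sum_shift_neg_le: fixes R d :: nat shows "(\<And>m. h m \<ge> 0) \<Longrightarrow> (\<Sum>n<R. h (n + d)) \<le> (\<Sum>m<R + d. (h m :: real))"
  using sum_shift_neg[where R=R and d=d and h=h] sum_nonneg[of "{..<d}" h] by simp

lemma L2_bound:
  fixes R :: nat
  assumes "(\<Sum>n<R. (g n)\<^sup>2) \<le> B\<^sup>2" "B \<ge> 0"
  shows "L2_set g {..<R} \<le> B"
proof -
  have "L2_set g {..<R} \<le> sqrt (B\<^sup>2)" unfolding L2_set_def using assms(1) by (rule real_sqrt_le_mono)
  then show ?thesis using assms(2) by simp
qed

lemma G_bound:
  fixes a b x :: "nat \<Rightarrow> complex"
  assumes x: "sb x N" and a: "\<And>n. cmod (a n) \<le> t" and b: "\<And>n. cmod (b n) \<le> t"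
    and a0: "\<And>n. n < d \<Longrightarrow> a n = 0"
  shows "l2_norm (\<lambda>n. a n * x (n - d) + b n * x (n + d)) \<le> 2 * t * l2_norm x"
proof -
  have t0: "t \<ge> 0" using a[of 0] norm_ge_zero[of "a 0"] by linarith
  have xl: "x \<in> l2" using sb_l2[OF x] .
  have nx: "l2_norm x \<ge> 0" using l2_norm_nonneg[OF xl] .
  let ?G = "\<lambda>n. a n * x (n - d) + b n * x (n + d)"
  have sG: "sb ?G (N + d)" using x unfolding sb_def by auto
  have 1: "L2_set (\<lambda>n. cmod (a n * x (n - d))) {..<N + d} \<le> t * l2_norm x"
  proof (rule L2_bound)
    have "(\<Sum>n<N + d. (cmod (a n * x (n - d)))\<^sup>2) \<le> (\<Sum>n<N + d. t\<^sup>2 * (if d \<le> n then (cmod (x (n - d)))\<^sup>2 else 0))"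
    proof (rule sum_mono)
      fix n
      show "(cmod (a n * x (n - d)))\<^sup>2 \<le> t\<^sup>2 * (if d \<le> n then (cmod (x (n - d)))\<^sup>2 else 0)"
      proof (cases "d \<le> n")
        case True
        have "(cmod (a n * x (n - d)))\<^sup>2 = (cmod (a n))\<^sup>2 * (cmod (x (n - d)))\<^sup>2" by (simp add: norm_mult power_mult_distrib)
        also have "\<dots> \<le> t\<^sup>2 * (cmod (x (n - d)))\<^sup>2" using a[of n] by (intro mult_right_mono power_mono) auto
        finally show ?thesis using True by simp
      qed (use a0 in simp)
    qed
    also have "\<dots> = t\<^sup>2 * (\<Sum>n<N + d. (if d \<le> n then (cmod (x (n - d)))\<^sup>2 else 0))" by (simp add: sum_distrib_left)
    also have "\<dots> \<le> t\<^sup>2 * (\<Sum>n<N + d. (cmod (x n))\<^sup>2)" by (intro mult_left_mono sum_shift_pos_le) auto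
    also have "\<dots> \<le> t\<^sup>2 * (l2_norm x)\<^sup>2" by (intro mult_left_mono l2_partial_le[OF xl]) auto
    finally show "(\<Sum>n<N + d. (cmod (a n * x (n - d)))\<^sup>2) \<le> (t * l2_norm x)\<^sup>2" by (simp add: power_mult_distrib)
    show "t * l2_norm x \<ge> 0" using t0 nx by simp
  qed
  have 2: "L2_set (\<lambda>n. cmod (b n * x (n + d))) {..<N + d} \<le> t * l2_norm x"
  proof (rule L2_bound)
    have "(\<Sum>n<N + d. (cmod (b n * x (n + d)))\<^sup>2) \<le> (\<Sum>n<N + d. t\<^sup>2 * (cmod (x (n + d)))\<^sup>2)"
    proof (rule sum_mono)
      fix n
      have "(cmod (b n * x (n + d)))\<^sup>2 = (cmod (b n))\<^sup>2 * (cmod (x (n + d)))\<^sup>2" by (simp add: norm_mult power_mult_distrib)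
      also have "\<dots> \<le> t\<^sup>2 * (cmod (x (n + d)))\<^sup>2" using b[of n] by (intro mult_right_mono power_mono) auto
      finally show "(cmod (b n * x (n + d)))\<^sup>2 \<le> t\<^sup>2 * (cmod (x (n + d)))\<^sup>2" .
    qed
    also have "\<dots> = t\<^sup>2 * (\<Sum>n<N + d. (cmod (x (n + d)))\<^sup>2)" by (simp add: sum_distrib_left)
    also have "\<dots> \<le> t\<^sup>2 * (\<Sum>n<N + d + d. (cmod (x n))\<^sup>2)" by (intro mult_left_mono sum_shift_neg_le) auto
    also have "\<dots> \<le> t\<^sup>2 * (l2_norm x)\<^sup>2" by (intro mult_left_mono l2_partial_le[OF xl]) auto
    finally show "(\<Sum>n<N + d. (cmod (b n * x (n + d)))\<^sup>2) \<le> (t * l2_norm x)\<^sup>2" by (simp add: power_mult_distrib)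
    show "t * l2_norm x \<ge> 0" using t0 nx by simp
  qed
  have "l2_norm ?G = L2_set (\<lambda>n. cmod (?G n)) {..<N + d}" by (rule norm_sb[OF sG])
  also have "\<dots> \<le> L2_set (\<lambda>n. cmod (a n * x (n - d)) + cmod (b n * x (n + d))) {..<N + d}"
    by (rule L2_set_mono) (auto intro: norm_triangle_ineq)
  also have "\<dots> \<le> L2_set (\<lambda>n. cmod (a n * x (n - d))) {..<N + d} + L2_set (\<lambda>n. cmod (b n * x (n + d))) {..<N + d}"
    by (rule L2_set_triangle_ineq)
  also have "\<dots> \<le> 2 * t * l2_norm x" using 1 2 by simp
  finally show ?thesis .
qed

definition ev :: "nat \<Rightarrow> nat \<Rightarrow> complex" where "ev n = (\<lambda>m. if m = n then 1 else 0)"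

lemma sb_ev: "sb (ev n) (Suc n)" unfolding sb_def ev_def by auto

lemma ip_ev: "l2_inner (ev n) y = y n"
proof -
  have "l2_inner (ev n) y = (\<Sum>m<Suc n. cnj (ev n m) * y m)" by (rule ip_sb[OF sb_ev])
  also have "\<dots> = (\<Sum>m\<in>{n}. cnj (ev n m) * y m)" by (rule sum.mono_neutral_right) (auto simp: ev_def)
  finally show ?thesis by (simp add: ev_def)
qed

lemma ip_add1: "sb a N \<Longrightarrow> sb b N \<Longrightarrow> l2_inner (\<lambda>n. a n + b n) y = l2_inner a y + l2_inner b y"
proof -
  assume a: "sb a N" and b: "sb b N"
  have ab: "sb (\<lambda>n. a n + b n) N" using a b unfolding sb_def by auto
  show ?thesis unfolding ip_sb[OF ab] ip_sb[OF a] ip_sb[OF b] by (simp add: sum.distrib distrib_right)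
qed

lemma ip_conj: "sb a N \<Longrightarrow> sb b N \<Longrightarrow> l2_inner a b = cnj (l2_inner b a)"
  by (simp add: ip_sb mult.commute)

lemma l2_add: "x \<in> l2 \<Longrightarrow> y \<in> l2 \<Longrightarrow> (\<lambda>n. x n + y n) \<in> l2"
proof -
  assume x: "x \<in> l2" and y: "y \<in> l2"
  have "(\<lambda>n. - y n) \<in> l2" using y unfolding l2_def by simp
  from l2_diff[OF x this] show ?thesis by simp
qed

lemma l2_scale: "x \<in> l2 \<Longrightarrow> (\<lambda>n. c * x n) \<in> l2"
  unfolding l2_def by (simp add: norm_mult power_mult_distrib summable_mult)

lemma l2_norm_minus: "l2_norm (\<lambda>n. - x n) = l2_norm x"
  unfolding l2_norm_def by simp

lemma l2_norm_triangle_sb: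
  assumes "sb u N" "sb v N"
  shows "l2_norm (\<lambda>n. u n - v n) \<le> l2_norm u + l2_norm v"
proof -
  have uv: "sb (\<lambda>n. u n - v n) N" using assms unfolding sb_def by auto
  have "l2_norm (\<lambda>n. u n - v n) = L2_set (\<lambda>n. cmod (u n - v n)) {..<N}" by (rule norm_sb[OF uv])
  also have "\<dots> \<le> L2_set (\<lambda>n. cmod (u n) + cmod (v n)) {..<N}"
    by (rule L2_set_mono) (auto intro: norm_triangle_ineq4)
  also have "\<dots> \<le> L2_set (\<lambda>n. cmod (u n)) {..<N} + L2_set (\<lambda>n. cmod (v n)) {..<N}"
    by (rule L2_set_triangle_ineq)
  also have "\<dots> = l2_norm u + l2_norm v" using norm_sb[OF assms(1)] norm_sb[OF assms(2)] by simp
  finally show ?thesis .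
qed

context opctx
begin

abbreviation "A \<equiv> Af k l \<xi> f"
abbreviation "dd \<equiv> k - l"

definition Lop :: "(nat \<Rightarrow> complex) \<Rightarrow> nat \<Rightarrow> complex" where
  "Lop x = (\<lambda>n. (\<xi> * of_real (alp k l n) * x (n - dd) + cnj \<xi> * of_real (bet k l n) * x (n + dd)) / of_real (f n + lam))"
definition Kop :: "(nat \<Rightarrow> complex) \<Rightarrow> nat \<Rightarrow> complex" where
  "Kop x = (\<lambda>n. \<xi> * of_real (alp k l n) * x (n - dd) / of_real (f (n - dd) + lam)
     + cnj \<xi> * of_real (bet k l n) * x (n + dd) / of_real (f (n + dd) + lam))"
definition Fl :: "(nat \<Rightarrow> complex) \<Rightarrow> nat \<Rightarrow> complex" where
  "Fl x = (\<lambda>n. of_real (f n + lam) * x n)"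

lemma fpos: "f n + lam > 0" using fnn[of n] lam by simp
lemma nz: "complex_of_real (f n + lam) \<noteq> 0" using fpos[of n] by (simp del: of_real_add)

lemma alp_sh: "alp k l (n + dd) = bet k l n" using alp_shift[OF kl] .
lemma alp_sm: "n < dd \<Longrightarrow> alp k l n = 0" using alp_small[OF kl] .

lemma sb_A: "sb x N \<Longrightarrow> sb (A x) (N + dd)"
  unfolding sb_def Af_def by auto
lemma sb_L: "sb x N \<Longrightarrow> sb (Lop x) (N + dd)"
  unfolding sb_def Lop_def by auto
lemma sb_K: "sb x N \<Longrightarrow> sb (Kop x) (N + dd)"
  unfolding sb_def Kop_def by auto
lemma sb_Fl: "sb x N \<Longrightarrow> sb (Fl x) N"
  unfolding sb_def Fl_def by auto

lemma cancel_c: "c \<noteq> 0 \<Longrightarrow> a * (c * z) / c = a * (z::complex)"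
  by (simp add: field_simps)

lemma Fl_L: "Fl (Lop x) = Kop (Fl x)"
proof (rule ext)
  fix n
  define c where "c = (\<lambda>m. complex_of_real (f m + lam))"
  have cnz: "c m \<noteq> 0" for m unfolding c_def by (rule nz)
  have "Fl (Lop x) n = c n * ((\<xi> * of_real (alp k l n) * x (n - dd) + cnj \<xi> * of_real (bet k l n) * x (n + dd)) / c n)"
    by (simp add: Fl_def Lop_def c_def)
  also have "\<dots> = \<xi> * of_real (alp k l n) * x (n - dd) + cnj \<xi> * of_real (bet k l n) * x (n + dd)"
    using cnz[of n] by simp
  also have "\<dots> = \<xi> * of_real (alp k l n) * (c (n - dd) * x (n - dd)) / c (n - dd)
      + cnj \<xi> * of_real (bet k l n) * (c (n + dd) * x (n + dd)) / c (n + dd)"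
    using cancel_c[OF cnz[of "n - dd"]] cancel_c[OF cnz[of "n + dd"]] by simp
  also have "\<dots> = Kop (Fl x) n" by (simp add: Kop_def Fl_def c_def)
  finally show "Fl (Lop x) n = Kop (Fl x) n" .
qed

lemma A_Fl: "(\<lambda>n. A x n + of_real lam * x n) = Fl (\<lambda>n. x n + Lop x n)"
proof (rule ext)
  fix n
  define c where "c = complex_of_real (f n + lam)"
  have cnz: "c \<noteq> 0" unfolding c_def by (rule nz)
  define B where "B = \<xi> * of_real (alp k l n) * x (n - dd) + cnj \<xi> * of_real (bet k l n) * x (n + dd)"
  have "A x n + of_real lam * x n = B + c * x n" unfolding B_def c_def Af_def by (simp add: algebra_simps)
  also have "\<dots> = c * (x n + B / c)" using cnz by (simp add: field_simps)
  also have "\<dots> = Fl (\<lambda>n. x n + Lop x n) n" unfolding Fl_def Lop_def B_def c_def by simp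
  finally show "A x n + of_real lam * x n = Fl (\<lambda>n. x n + Lop x n) n" .
qed

lemma L_norm: "sb x N \<Longrightarrow> l2_norm (Lop x) \<le> 2 * th * l2_norm x"
proof -
  assume x: "sb x N"
  define a where "a = (\<lambda>n. \<xi> * of_real (alp k l n) / of_real (f n + lam))"
  define b where "b = (\<lambda>n. cnj \<xi> * of_real (bet k l n) / of_real (f n + lam))"
  have e: "Lop x = (\<lambda>n. a n * x (n - dd) + b n * x (n + dd))"
    unfolding Lop_def a_def b_def by (rule ext) (simp add: add_divide_distrib)
  have ca: "cmod (a n) \<le> th" for n
  proof -
    have "cmod (a n) = cmod \<xi> * alp k l n / (f n + lam)"
      unfolding a_def using fpos[of n] alp_nonneg[of k l n] by (simp del: of_real_add add: norm_mult norm_divide)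
    also have "\<dots> \<le> th" using ba[of n] fpos[of n] by (simp add: divide_le_eq)
    finally show ?thesis .
  qed
  have cb: "cmod (b n) \<le> th" for n
  proof -
    have "cmod (b n) = cmod \<xi> * bet k l n / (f n + lam)"
      unfolding b_def using fpos[of n] bet_nonneg[of k l n] by (simp del: of_real_add add: norm_mult norm_divide)
    also have "\<dots> \<le> th" using bb[of n] fpos[of n] by (simp add: divide_le_eq)
    finally show ?thesis .
  qed
  have a0: "n < dd \<Longrightarrow> a n = 0" for n unfolding a_def using alp_sm by simp
  show ?thesis unfolding e by (rule G_bound[OF x ca cb a0])
qed

lemma K_norm: "sb x N \<Longrightarrow> l2_norm (Kop x) \<le> 2 * th * l2_norm x"
proof -
  assume x: "sb x N"
  define a where "a = (\<lambda>n. \<xi> * of_real (alp k l n) / of_real (f (n - dd) + lam))"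
  define b where "b = (\<lambda>n. cnj \<xi> * of_real (bet k l n) / of_real (f (n + dd) + lam))"
  have e: "Kop x = (\<lambda>n. a n * x (n - dd) + b n * x (n + dd))"
    unfolding Kop_def a_def b_def by (rule ext) (simp add: field_simps)
  have ca: "cmod (a n) \<le> th" for n
  proof (cases "n < dd")
    case True then show ?thesis unfolding a_def using alp_sm th0 by simp
  next
    case False
    then have "alp k l n = bet k l (n - dd)" using alp_sh[of "n - dd"] by simp
    then have "cmod (a n) = cmod \<xi> * bet k l (n - dd) / (f (n - dd) + lam)"
      unfolding a_def using fpos[of "n - dd"] bet_nonneg[of k l "n - dd"] by (simp del: of_real_add add: norm_mult norm_divide)
    also have "\<dots> \<le> th" using bb[of "n - dd"] fpos[of "n - dd"] by (simp add: divide_le_eq)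
    finally show ?thesis .
  qed
  have cb: "cmod (b n) \<le> th" for n
  proof -
    have "cmod (b n) = cmod \<xi> * alp k l (n + dd) / (f (n + dd) + lam)"
      unfolding b_def alp_sh using fpos[of "n + dd"] bet_nonneg[of k l n] by (simp del: of_real_add add: norm_mult norm_divide)
    also have "\<dots> \<le> th" using ba[of "n + dd"] fpos[of "n + dd"] by (simp add: divide_le_eq)
    finally show ?thesis .
  qed
  have a0: "n < dd \<Longrightarrow> a n = 0" for n unfolding a_def using alp_sm by simp
  show ?thesis unfolding e by (rule G_bound[OF x ca cb a0])
qed

lemma sym_A:
  assumes x: "sb x N"
  shows "l2_inner (A x) y = l2_inner x (A y)"
proof -
  define P1 where "P1 = (\<lambda>n. cnj \<xi> * of_real (alp k l n) * cnj (x (n - dd)) * y n)"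
  define P2 where "P2 = (\<lambda>n. \<xi> * of_real (bet k l n) * cnj (x (n + dd)) * y n)"
  define Q1 where "Q1 = (\<lambda>n. \<xi> * of_real (alp k l n) * cnj (x n) * y (n - dd))"
  define Q2 where "Q2 = (\<lambda>n. cnj \<xi> * of_real (bet k l n) * cnj (x n) * y (n + dd))"
  define P3 where "P3 = (\<lambda>n. of_real (f n) * cnj (x n) * y n)"
  have xR: "sb x (N + dd)" using sb_mono[OF x] by simp
  have L: "l2_inner (A x) y = (\<Sum>n<N + dd. P1 n) + (\<Sum>n<N + dd. P2 n) + (\<Sum>n<N + dd. P3 n)"
    unfolding ip_sb[OF sb_A[OF x]] P1_def P2_def P3_def
    by (simp add: Af_def sum.distrib algebra_simps)
  have R: "l2_inner x (A y) = (\<Sum>n<N + dd. Q1 n) + (\<Sum>n<N + dd. Q2 n) + (\<Sum>n<N + dd. P3 n)"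
    unfolding ip_sb[OF xR] Q1_def Q2_def P3_def
    by (simp add: Af_def sum.distrib algebra_simps)
  have x0: "\<And>n. n \<ge> N \<Longrightarrow> x n = 0" using x unfolding sb_def by auto
  have "(\<Sum>n<N + dd. P1 n) = (\<Sum>n<N. P1 (n + dd))"
    by (rule sum_shift_neg0) (simp add: P1_def alp_sm)
  also have "\<dots> = (\<Sum>n<N. Q2 n)" unfolding P1_def Q2_def alp_sh by (simp add: algebra_simps)
  also have "\<dots> = (\<Sum>n<N + dd. Q2 n)" by (rule sum_trunc[symmetric]) (auto simp: Q2_def x0)
  finally have 1: "(\<Sum>n<N + dd. P1 n) = (\<Sum>n<N + dd. Q2 n)" .
  have "(\<Sum>n<N + dd. Q1 n) = (\<Sum>n<N. Q1 (n + dd))"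
    by (rule sum_shift_neg0) (simp add: Q1_def alp_sm)
  also have "\<dots> = (\<Sum>n<N. P2 n)" unfolding P2_def Q1_def alp_sh by (simp add: algebra_simps)
  also have "\<dots> = (\<Sum>n<N + dd. P2 n)" by (rule sum_trunc[symmetric]) (auto simp: P2_def x0)
  finally have 2: "(\<Sum>n<N + dd. Q1 n) = (\<Sum>n<N + dd. P2 n)" .
  show ?thesis unfolding L R 1 2 by (simp add: algebra_simps)
qed

lemma A_ev: "l2_inner (A (ev n)) y = A y n"
  using sym_A[OF sb_ev, of n y] ip_ev by simp

lemma A_lam_sym:
  assumes x: "sb x N"
  shows "l2_inner (\<lambda>n. A x n + of_real lam * x n) y = l2_inner x (\<lambda>n. A y n + of_real lam * y n)"
proof -
  have x2: "sb x (N + dd)" using sb_mono[OF x] by simp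
  have s2: "sb (\<lambda>n. of_real lam * x n) (N + dd)" using x2 unfolding sb_def by auto
  have e1: "l2_inner (\<lambda>n. A x n + of_real lam * x n) y = l2_inner (A x) y + l2_inner (\<lambda>n. of_real lam * x n) y"
    by (rule ip_add1[OF sb_A[OF x] s2])
  have e2: "l2_inner (\<lambda>n. of_real lam * x n) y = of_real lam * l2_inner x y"
    unfolding ip_sb[OF s2] ip_sb[OF x2] by (simp add: sum_distrib_left algebra_simps)
  have e3: "l2_inner x (\<lambda>n. A y n + of_real lam * y n) = l2_inner x (A y) + of_real lam * l2_inner x y"
    unfolding ip_sb[OF x2] by (simp add: sum.distrib sum_distrib_left algebra_simps)
  show ?thesis unfolding e1 e2 e3 using sym_A[OF x] by simp
qed

end

lemma D0_add: "x \<in> D0 \<Longrightarrow> y \<in> D0 \<Longrightarrow> (\<lambda>n. x n + y n) \<in> D0"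
proof -
  assume "x \<in> D0" "y \<in> D0"
  then obtain N M where "sb x N" "sb y M" using D0_sb by metis
  then have "sb (\<lambda>n. x n + y n) (max N M)" unfolding sb_def by auto
  then show ?thesis using D0_sb by blast
qed

lemma D0_diff: "x \<in> D0 \<Longrightarrow> y \<in> D0 \<Longrightarrow> (\<lambda>n. x n - y n) \<in> D0"
proof -
  assume "x \<in> D0" "y \<in> D0"
  then obtain N M where "sb x N" "sb y M" using D0_sb by metis
  then have "sb (\<lambda>n. x n - y n) (max N M)" unfolding sb_def by auto
  then show ?thesis using D0_sb by blast
qed

lemma D0_minus: "x \<in> D0 \<Longrightarrow> (\<lambda>n. - x n) \<in> D0"
  unfolding D0_def by simp

lemma ip_add1': "a \<in> D0 \<Longrightarrow> b \<in> D0 \<Longrightarrow> l2_inner (\<lambda>n. a n + b n) y = l2_inner a y + l2_inner b y"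
proof -
  assume "a \<in> D0" "b \<in> D0"
  then obtain N M where "sb a N" "sb b M" using D0_sb by metis
  then have "sb a (max N M)" "sb b (max N M)" using sb_mono by auto
  then show ?thesis by (rule ip_add1)
qed

lemma cs_D0: "x \<in> D0 \<Longrightarrow> y \<in> l2 \<Longrightarrow> cmod (l2_inner x y) \<le> l2_norm x * l2_norm y"
  using D0_sb cs_sb by metis

lemma tri_D0: "u \<in> D0 \<Longrightarrow> v \<in> D0 \<Longrightarrow> l2_norm (\<lambda>n. u n - v n) \<le> l2_norm u + l2_norm v"
proof -
  assume "u \<in> D0" "v \<in> D0"
  then obtain N M where "sb u N" "sb v M" using D0_sb by metis
  then have "sb u (max N M)" "sb v (max N M)" using sb_mono by auto
  then show ?thesis by (rule l2_norm_triangle_sb)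
qed

context opctx
begin

lemma D0_A: "x \<in> D0 \<Longrightarrow> A x \<in> D0" using D0_sb sb_A by metis
lemma D0_L: "x \<in> D0 \<Longrightarrow> Lop x \<in> D0" using D0_sb sb_L by metis
lemma D0_K: "x \<in> D0 \<Longrightarrow> Kop x \<in> D0" using D0_sb sb_K by metis
lemma D0_Fl: "x \<in> D0 \<Longrightarrow> Fl x \<in> D0" using D0_sb sb_Fl by metis
lemma L_norm': "x \<in> D0 \<Longrightarrow> l2_norm (Lop x) \<le> 2 * th * l2_norm x" using D0_sb L_norm by metis
lemma K_norm': "x \<in> D0 \<Longrightarrow> l2_norm (Kop x) \<le> 2 * th * l2_norm x" using D0_sb K_norm by metis
lemma sym_A': "x \<in> D0 \<Longrightarrow> l2_inner (A x) y = l2_inner x (A y)" using D0_sb sym_A by metis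
lemma A_lam_sym': "x \<in> D0 \<Longrightarrow> l2_inner (\<lambda>n. A x n + of_real lam * x n) y = l2_inner x (\<lambda>n. A y n + of_real lam * y n)"
  using D0_sb A_lam_sym by metis

lemma Lop_alt: "Lop x = (\<lambda>n. inverse (complex_of_real (f n + lam)) * (\<xi> * of_real (alp k l n) * x (n - dd) + cnj \<xi> * of_real (bet k l n) * x (n + dd)))"
  unfolding Lop_def by (simp add: divide_inverse mult.commute del: of_real_add)

lemma Lop_diff: "Lop (\<lambda>n. u n - v n) = (\<lambda>n. Lop u n - Lop v n)"
  unfolding Lop_alt by (rule ext) (simp add: algebra_simps del: of_real_add)

lemma Lop_add: "Lop (\<lambda>n. u n + v n) = (\<lambda>n. Lop u n + Lop v n)"
  unfolding Lop_alt by (rule ext) (simp add: algebra_simps del: of_real_add)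

lemma Lop_zero: "Lop (\<lambda>n. 0) = (\<lambda>n. 0)"
  unfolding Lop_def by simp

lemma Fl_minus: "Fl (\<lambda>n. - u n) = (\<lambda>n. - Fl u n)"
  unfolding Fl_def by simp

lemma th2: "2 * th < 1" "0 \<le> 2 * th" using th0 th1 by auto

lemma key_bound:
  assumes y: "y \<in> l2" and gl: "(\<lambda>n. A y n + of_real lam * y n) \<in> l2" and p: "p \<in> D0"
  shows "cmod (l2_inner (Fl p) y) \<le> l2_norm (\<lambda>n. A y n + of_real lam * y n) / (1 - 2 * th) * l2_norm p"
proof -
  define g where "g = (\<lambda>n. A y n + of_real lam * y n)"
  have g: "g \<in> l2" using gl unfolding g_def .
  define step where "step = (\<lambda>\<phi>::nat\<Rightarrow>complex. (\<lambda>n. p n - Lop \<phi> n))"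
  define phi where "phi = (\<lambda>M. (step ^^ M) (\<lambda>n. 0))"
  have phi0: "phi 0 = (\<lambda>n. 0)" unfolding phi_def by simp
  have phiS: "phi (Suc M) = (\<lambda>n. p n - Lop (phi M) n)" for M unfolding phi_def step_def by simp
  define r where "r = (\<lambda>M. (\<lambda>n. phi M n + Lop (phi M) n - p n))"
  have phiD: "phi M \<in> D0" for M
  proof (induction M)
    case 0 show ?case unfolding phi0 D0_def by simp
  next
    case (Suc M) show ?case unfolding phiS by (intro D0_diff p D0_L Suc)
  qed
  have rD: "r M \<in> D0" for M unfolding r_def by (intro D0_diff D0_add phiD D0_L p)
  have r0: "r 0 = (\<lambda>n. - p n)" unfolding r_def phi0 Lop_zero by simp
  have rS: "r (Suc M) = (\<lambda>n. - Lop (r M) n)" for M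
  proof -
    have a: "Lop (\<lambda>n. p n - Lop (phi M) n) = (\<lambda>n. Lop p n - Lop (Lop (phi M)) n)" by (rule Lop_diff)
    have b: "Lop (r M) = (\<lambda>n. Lop (phi M) n + Lop (Lop (phi M)) n - Lop p n)"
      unfolding r_def Lop_diff Lop_add by simp
    show ?thesis unfolding b apply (subst r_def) unfolding phiS a by (rule ext) (simp add: algebra_simps)
  qed
  have pF: "Fl p \<in> D0" by (rule D0_Fl[OF p])
  have nr: "l2_norm (Fl (r M)) \<le> (2 * th) ^ M * l2_norm (Fl p)" for M
  proof (induction M)
    case 0 show ?case unfolding r0 Fl_minus l2_norm_minus by simp
  next
    case (Suc M)
    have "l2_norm (Fl (r (Suc M))) = l2_norm (Kop (Fl (r M)))"
      unfolding rS Fl_minus Fl_L l2_norm_minus ..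
    also have "\<dots> \<le> 2 * th * l2_norm (Fl (r M))" by (rule K_norm'[OF D0_Fl[OF rD]])
    also have "\<dots> \<le> 2 * th * ((2 * th) ^ M * l2_norm (Fl p))" using Suc th2 by (intro mult_left_mono) auto
    finally show ?case by simp
  qed
  have np: "l2_norm p \<ge> 0" using l2_norm_nonneg[OF D0_l2[OF p]] .
  have nphi: "l2_norm (phi M) \<le> l2_norm p / (1 - 2 * th)" for M
  proof (induction M)
    case 0
    have "l2_norm (\<lambda>n::nat. 0::complex) = 0" by (simp add: l2_norm_def)
    then show ?case unfolding phi0 using np th2 by simp
  next
    case (Suc M)
    have "l2_norm (phi (Suc M)) \<le> l2_norm p + l2_norm (Lop (phi M))"
      unfolding phiS by (rule tri_D0[OF p D0_L[OF phiD]])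
    also have "\<dots> \<le> l2_norm p + 2 * th * l2_norm (phi M)" using L_norm'[OF phiD] by simp
    also have "\<dots> \<le> l2_norm p + 2 * th * (l2_norm p / (1 - 2 * th))" using Suc th2 by (intro add_left_mono mult_left_mono) auto
    also have "\<dots> = l2_norm p / (1 - 2 * th)" using th2 by (simp add: field_simps)
    finally show ?case .
  qed
  have ident: "l2_inner (Fl p) y = l2_inner (phi M) g - l2_inner (Fl (r M)) y" for M
  proof -
    have e1: "(\<lambda>n. A (phi M) n + of_real lam * phi M n) = (\<lambda>n. Fl p n + Fl (r M) n)"
      unfolding A_Fl by (rule ext) (simp add: Fl_def r_def algebra_simps)
    have "l2_inner (phi M) g = l2_inner (\<lambda>n. A (phi M) n + of_real lam * phi M n) y"
      unfolding g_def using A_lam_sym'[OF phiD] by simp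
    also have "\<dots> = l2_inner (Fl p) y + l2_inner (Fl (r M)) y"
      unfolding e1 by (rule ip_add1'[OF pF D0_Fl[OF rD]])
    finally show ?thesis by simp
  qed
  define C where "C = l2_norm g / (1 - 2 * th)"
  have ng: "l2_norm g \<ge> 0" using l2_norm_nonneg[OF g] .
  have ny: "l2_norm y \<ge> 0" using l2_norm_nonneg[OF y] .
  have nFp: "l2_norm (Fl p) \<ge> 0" using l2_norm_nonneg[OF D0_l2[OF pF]] .
  have bnd: "cmod (l2_inner (Fl p) y) \<le> C * l2_norm p + (2 * th) ^ M * (l2_norm (Fl p) * l2_norm y)" for M
  proof -
    have "cmod (l2_inner (Fl p) y) \<le> cmod (l2_inner (phi M) g) + cmod (l2_inner (Fl (r M)) y)"
      unfolding ident[of M] by (rule norm_triangle_ineq4)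
    also have "\<dots> \<le> l2_norm (phi M) * l2_norm g + l2_norm (Fl (r M)) * l2_norm y"
      by (intro add_mono cs_D0 phiD g D0_Fl rD y)
    also have "\<dots> \<le> (l2_norm p / (1 - 2 * th)) * l2_norm g + ((2 * th) ^ M * l2_norm (Fl p)) * l2_norm y"
      using nphi[of M] nr[of M] ng ny by (intro add_mono mult_right_mono) auto
    also have "\<dots> = C * l2_norm p + (2 * th) ^ M * (l2_norm (Fl p) * l2_norm y)"
      unfolding C_def by (simp add: field_simps)
    finally show ?thesis .
  qed
  have "cmod (l2_inner (Fl p) y) \<le> C * l2_norm p"
  proof (rule field_le_epsilon)
    fix e :: real assume e: "0 < e"
    define B where "B = l2_norm (Fl p) * l2_norm y + 1"
    have B: "B > 0" unfolding B_def using nFp ny by (simp add: add_nonneg_pos)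
    obtain M where M: "(2 * th) ^ M < e / B" using real_arch_pow_inv[of "e / B" "2 * th"] e B th2 by auto
    have "(2 * th) ^ M * (l2_norm (Fl p) * l2_norm y) \<le> (2 * th) ^ M * B"
      unfolding B_def using th2 by (intro mult_left_mono) auto
    also have "\<dots> < e" using M B by (simp add: field_simps)
    finally show "cmod (l2_inner (Fl p) y) \<le> C * l2_norm p + e" using bnd[of M] by simp
  qed
  then show ?thesis unfolding C_def g_def .
qed

lemma regular:
  assumes y: "y \<in> l2" and Ay: "A y \<in> l2"
  shows "Fl y \<in> l2"
proof -
  define g where "g = (\<lambda>n. A y n + of_real lam * y n)"
  have g: "g \<in> l2" unfolding g_def by (intro l2_add Ay l2_scale y)
  define C where "C = l2_norm g / (1 - 2 * th)"
  show ?thesis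
  proof (rule l2_bounded(1))
    fix N
    define S where "S = (\<Sum>n<N. (cmod (Fl y n))\<^sup>2)"
    define p where "p = (\<lambda>n. if n < N then Fl y n else 0)"
    have sp: "sb p N" unfolding sb_def p_def by auto
    have pD: "p \<in> D0" using sp D0_sb by blast
    have S0: "S \<ge> 0" unfolding S_def by (simp add: sum_nonneg)
    have trm: "cnj (Fl p n) * y n = of_real ((cmod (Fl y n))\<^sup>2)" if "n < N" for n
    proof -
      define c where "c = f n + lam"
      have c: "c > 0" unfolding c_def by (rule fpos)
      have sq: "of_real ((cmod (y n))\<^sup>2) = y n * cnj (y n)" by (rule complex_norm_square)
      have "Fl y n = of_real c * y n" "Fl p n = of_real c * (of_real c * y n)"
        using that unfolding Fl_def p_def c_def by simp_all
      then have "cnj (Fl p n) * y n = of_real c * of_real c * (y n * cnj (y n))" by (simp add: algebra_simps)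
      also have "\<dots> = of_real ((cmod (Fl y n))\<^sup>2)"
        using c \<open>Fl y n = of_real c * y n\<close> sq[symmetric] by (simp add: norm_mult power_mult_distrib power2_eq_square)
      finally show ?thesis .
    qed
    have ip: "l2_inner (Fl p) y = of_real S"
      unfolding ip_sb[OF sb_Fl[OF sp]] S_def of_real_sum using trm by (intro sum.cong) auto
    have ps: "(\<Sum>n<N. (cmod (p n))\<^sup>2) = S" unfolding S_def p_def by (intro sum.cong) auto
    have np: "l2_norm p = sqrt S"
      using ps by (simp add: norm_sb[OF sp] L2_set_def)
    have "S \<le> C * sqrt S"
      using key_bound[OF y _ pD] g unfolding ip np C_def g_def using S0 by simp
    show "S \<le> C\<^sup>2"
    proof (cases "S = 0")
      case True then show ?thesis by simp
    next
      case False
      then have sS: "sqrt S > 0" using S0 by simp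
      have ss: "sqrt S * sqrt S = S" using S0 by simp
      have "sqrt S * sqrt S \<le> C * sqrt S" using \<open>S \<le> C * sqrt S\<close> unfolding ss .
      then have "sqrt S \<le> C" by (rule mult_right_le_imp_le[OF _ sS])
      then have "(sqrt S)\<^sup>2 \<le> C\<^sup>2" using sS by (intro power_mono) auto
      then show ?thesis using S0 by simp
    qed
  qed
qed

end

lemma tail_eq:
  assumes "summable w"
  shows "(\<Sum>n. if j \<le> n then w n else 0) = suminf w - (\<Sum>n<j. w n :: real)"
proof -
  have s2: "summable (\<lambda>n. if n < j then w n else 0)" by (rule summable_finite[of "{..<j}"]) auto
  have e: "(\<lambda>n. if j \<le> n then w n else 0) = (\<lambda>n. w n - (if n < j then w n else 0))" by (rule ext) auto
  have f: "(\<Sum>n. if n < j then w n else 0) = (\<Sum>n<j. w n)" by (subst suminf_finite[of "{..<j}"]) auto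
  show ?thesis unfolding e using suminf_diff[OF assms s2] f by simp
qed

lemma tail0:
  assumes "summable w"
  shows "(\<lambda>j. \<Sum>n. if j \<le> n then w n else 0) \<longlonglongrightarrow> (0::real)"
proof -
  have "(\<lambda>j. suminf w - (\<Sum>n<j. w n)) \<longlonglongrightarrow> suminf w - suminf w"
    by (intro tendsto_diff tendsto_const summable_LIMSEQ assms)
  then show ?thesis unfolding tail_eq[OF assms] by simp
qed

lemma trunc_D0: "(\<lambda>n. if n < j then x n else 0) \<in> D0"
proof -
  have "sb (\<lambda>n. if n < j then x n else 0) j" unfolding sb_def by auto
  then show ?thesis using D0_sb by blast
qed

lemma trunc_conv:
  assumes x: "x \<in> l2"
  shows "l2_tendsto (\<lambda>j n. if n < j then x n else 0) x"
proof -
  have w: "summable (\<lambda>n. (cmod (x n))\<^sup>2)" using l2_summable[OF x] .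
  have e: "l2_norm ((\<lambda>n. if n < j then x n else 0) - x) = sqrt (\<Sum>n. if j \<le> n then (cmod (x n))\<^sup>2 else 0)" for j
  proof -
    have "(\<lambda>n. (cmod (((\<lambda>n. if n < j then x n else 0) - x) n))\<^sup>2) = (\<lambda>n. if j \<le> n then (cmod (x n))\<^sup>2 else 0)"
      by (rule ext) auto
    then show ?thesis unfolding l2_norm_def by simp
  qed
  have "(\<lambda>j. sqrt (\<Sum>n. if j \<le> n then (cmod (x n))\<^sup>2 else 0)) \<longlonglongrightarrow> sqrt 0"
    by (intro tendsto_real_sqrt tail0 w)
  then show ?thesis unfolding l2_tendsto_def e by simp
qed

context opctx
begin

lemma A_partial:
  assumes Fu: "Fl u \<in> l2"
  shows "(\<Sum>n<N. (cmod (A u n))\<^sup>2) \<le> 9 * (\<Sum>m. (cmod (Fl u m))\<^sup>2)"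
proof -
  define v where "v = (\<lambda>m. cmod (Fl u m))"
  have v: "v m = (f m + lam) * cmod (u m)" for m unfolding v_def Fl_def using fpos[of m]
    by (simp del: of_real_add add: norm_mult)
  have v0: "v m \<ge> 0" for m unfolding v_def by simp
  have sv: "summable (\<lambda>m. (v m)\<^sup>2)" unfolding v_def using l2_summable[OF Fu] .
  define V where "V = (\<Sum>m. (v m)\<^sup>2)"
  have pt: "cmod (A u n) \<le> (if dd \<le> n then v (n - dd) else 0) + v (n + dd) + v n" for n
  proof -
    have "cmod (A u n) \<le> cmod \<xi> * alp k l n * cmod (u (n - dd)) + cmod \<xi> * bet k l n * cmod (u (n + dd)) + f n * cmod (u n)"
    proof -
      have "cmod (A u n) \<le> cmod (\<xi> * of_real (alp k l n) * u (n - dd)) + cmod (cnj \<xi> * of_real (bet k l n) * u (n + dd)) + cmod (of_real (f n) * u n)"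
        unfolding Af_def by (rule order_trans[OF norm_triangle_ineq add_right_mono[OF norm_triangle_ineq]])
      also have "\<dots> = cmod \<xi> * alp k l n * cmod (u (n - dd)) + cmod \<xi> * bet k l n * cmod (u (n + dd)) + f n * cmod (u n)"
        using alp_nonneg[of k l n] bet_nonneg[of k l n] fnn[of n] by (simp add: norm_mult)
      finally show ?thesis .
    qed
    also have "\<dots> \<le> (if dd \<le> n then v (n - dd) else 0) + v (n + dd) + v n"
    proof (intro add_mono)
      show "cmod \<xi> * alp k l n * cmod (u (n - dd)) \<le> (if dd \<le> n then v (n - dd) else 0)"
      proof (cases "dd \<le> n")
        case True
        then have "alp k l n = bet k l (n - dd)" using alp_sh[of "n - dd"] by simp
        then have "cmod \<xi> * alp k l n \<le> th * (f (n - dd) + lam)" using bb[of "n - dd"] by simp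
        also have "\<dots> \<le> f (n - dd) + lam" using th1 fpos[of "n - dd"] by (simp add: mult_le_cancel_right1)
        finally show ?thesis using True v[of "n - dd"] by (simp add: mult_right_mono)
      qed (simp add: alp_sm)
      have "cmod \<xi> * bet k l n \<le> th * (f (n + dd) + lam)" using ba[of "n + dd"] alp_sh[of n] by simp
      also have "\<dots> \<le> f (n + dd) + lam" using th1 fpos[of "n + dd"] by (simp add: mult_le_cancel_right1)
      finally show "cmod \<xi> * bet k l n * cmod (u (n + dd)) \<le> v (n + dd)" using v[of "n + dd"] by (simp add: mult_right_mono)
      show "f n * cmod (u n) \<le> v n" using v[of n] lam by (simp add: mult_right_mono)
    qed
    finally show ?thesis .
  qed
  have sq3: "(a + b + c)\<^sup>2 \<le> 3 * (a\<^sup>2 + b\<^sup>2 + c\<^sup>2)" for a b c :: real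
    using sum_squares_bound[of a b] sum_squares_bound[of a c] sum_squares_bound[of b c]
    by (simp add: power2_sum algebra_simps)
  have "(\<Sum>n<N. (cmod (A u n))\<^sup>2) \<le> (\<Sum>n<N. 3 * ((if dd \<le> n then (v (n - dd))\<^sup>2 else 0) + (v (n + dd))\<^sup>2 + (v n)\<^sup>2))"
  proof (rule sum_mono)
    fix n
    have "(cmod (A u n))\<^sup>2 \<le> ((if dd \<le> n then v (n - dd) else 0) + v (n + dd) + v n)\<^sup>2"
      using pt[of n] by (intro power_mono) auto
    also have "\<dots> \<le> 3 * ((if dd \<le> n then v (n - dd) else 0)\<^sup>2 + (v (n + dd))\<^sup>2 + (v n)\<^sup>2)" by (rule sq3)
    also have "(if dd \<le> n then v (n - dd) else 0)\<^sup>2 = (if dd \<le> n then (v (n - dd))\<^sup>2 else 0)" by simp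
    finally show "(cmod (A u n))\<^sup>2 \<le> 3 * ((if dd \<le> n then (v (n - dd))\<^sup>2 else 0) + (v (n + dd))\<^sup>2 + (v n)\<^sup>2)" .
  qed
  also have "\<dots> = 3 * ((\<Sum>n<N. (if dd \<le> n then (v (n - dd))\<^sup>2 else 0)) + (\<Sum>n<N. (v (n + dd))\<^sup>2) + (\<Sum>n<N. (v n)\<^sup>2))"
    by (simp add: sum.distrib sum_distrib_left)
  also have "\<dots> \<le> 3 * (V + V + V)"
  proof -
    have 1: "(\<Sum>n<N. (if dd \<le> n then (v (n - dd))\<^sup>2 else 0)) \<le> V"
      using sum_shift_pos_le[where h="\<lambda>m. (v m)\<^sup>2" and R=N and d=dd] sum_le_suminf[OF sv, of "{..<N}"] unfolding V_def by simp
    have 2: "(\<Sum>n<N. (v (n + dd))\<^sup>2) \<le> V"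
      using sum_shift_neg_le[where h="\<lambda>m. (v m)\<^sup>2" and R=N and d=dd] sum_le_suminf[OF sv, of "{..<N + dd}"] unfolding V_def by simp
    have 3: "(\<Sum>n<N. (v n)\<^sup>2) \<le> V"
      using sum_le_suminf[OF sv, of "{..<N}"] unfolding V_def by simp
    show ?thesis using 1 2 3 by simp
  qed
  finally show ?thesis unfolding V_def v_def by simp
qed

lemma approx_A:
  assumes y: "y \<in> l2" and Ay: "A y \<in> l2"
  shows "l2_tendsto (\<lambda>j. A (\<lambda>n. if n < j then y n else 0)) (A y)"
proof -
  have Fy: "Fl y \<in> l2" by (rule regular[OF y Ay])
  define u where "u = (\<lambda>j n. if j \<le> n then y n else 0)"
  define T where "T = (\<lambda>j. \<Sum>m. (cmod (Fl (u j) m))\<^sup>2)"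
  have Tu: "(\<lambda>m. (cmod (Fl (u j) m))\<^sup>2) = (\<lambda>m. if j \<le> m then (cmod (Fl y m))\<^sup>2 else 0)" for j
    unfolding u_def Fl_def by (rule ext) simp
  have Fu: "Fl (u j) \<in> l2" for j
  proof -
    have "summable (\<lambda>m. if j \<le> m then (cmod (Fl y m))\<^sup>2 else 0)"
      by (rule summable_comparison_test'[OF l2_summable[OF Fy], where N=0]) simp
    then show ?thesis unfolding l2_def using Tu[of j] by simp
  qed
  have T0: "T \<longlonglongrightarrow> 0" unfolding T_def Tu by (rule tail0[OF l2_summable[OF Fy]])
  have T0': "(\<lambda>j. sqrt (9 * T j)) \<longlonglongrightarrow> 0"
  proof -
    have "(\<lambda>j. sqrt (9 * T j)) \<longlonglongrightarrow> sqrt (9 * 0)" by (intro tendsto_real_sqrt tendsto_mult tendsto_const T0)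
    then show ?thesis by simp
  qed
  have diff: "A (\<lambda>n. if n < j then y n else 0) - A y = (\<lambda>n. - A (u j) n)" for j
  proof -
    have "(\<lambda>n. if n < j then y n else 0) = (\<lambda>n. y n - u j n)" unfolding u_def by (rule ext) auto
    moreover have "A (\<lambda>n. y n - w n) - A y = (\<lambda>n. - A w n)" for w
      unfolding Af_def by (rule ext) (simp add: algebra_simps)
    ultimately show ?thesis by simp
  qed
  have bnd: "norm (l2_norm (A (\<lambda>n. if n < j then y n else 0) - A y)) \<le> sqrt (9 * T j)" for j
  proof -
    have pb: "\<And>N. (\<Sum>n<N. (cmod (A (u j) n))\<^sup>2) \<le> 9 * T j" unfolding T_def by (rule A_partial[OF Fu])
    have l: "A (u j) \<in> l2" by (rule l2_bounded(1)[OF pb])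
    have "l2_norm (A (u j)) \<le> sqrt (9 * T j)" by (rule l2_bounded(2)[OF pb])
    then show ?thesis unfolding diff l2_norm_minus using l2_norm_nonneg[OF l] by simp
  qed
  show ?thesis unfolding l2_tendsto_def
    by (rule Lim_null_comparison[OF always_eventually T0']) (use bnd in auto)
qed

lemma cg_char:
  "(x, z) \<in> closure_graph (A_op k l \<xi> f) \<longleftrightarrow> x \<in> l2 \<and> A x \<in> l2 \<and> z = A x"
proof
  assume "(x, z) \<in> closure_graph (A_op k l \<xi> f)"
  then obtain s where x: "x \<in> l2" and z: "z \<in> l2" and sD: "\<And>j. s j \<in> D0" and sx: "l2_tendsto s x"
    and sz: "l2_tendsto (\<lambda>j. A (s j)) z"
    unfolding closure_graph_def A_op_eq[OF kl] by auto
  have "z = A x"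
  proof (rule ext)
    fix n
    have t1: "(\<lambda>j. A (s j) n) \<longlonglongrightarrow> z n"
      by (rule comp_conv[OF _ z sz]) (intro D0_l2 D0_A sD)
    define R where "R = Suc n + dd"
    have sR: "sb (A (ev n)) R" unfolding R_def by (rule sb_A[OF sb_ev])
    have e: "A w n = (\<Sum>m<R. cnj (A (ev n) m) * w m)" for w
      using A_ev[of n w] ip_sb[OF sR, of w] by simp
    have t2: "(\<lambda>j. A (s j) n) \<longlonglongrightarrow> A x n"
      unfolding e by (intro tendsto_sum tendsto_mult tendsto_const comp_conv[OF _ x sx] D0_l2 sD)
    show "z n = A x n" using LIMSEQ_unique[OF t1 t2] .
  qed
  then show "x \<in> l2 \<and> A x \<in> l2 \<and> z = A x" using x z by simp
next
  assume a: "x \<in> l2 \<and> A x \<in> l2 \<and> z = A x"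
  then have x: "x \<in> l2" "A x \<in> l2" "z = A x" by auto
  show "(x, z) \<in> closure_graph (A_op k l \<xi> f)"
    unfolding closure_graph_def A_op_eq[OF kl]
    using x trunc_D0 trunc_conv[OF x(1)] approx_A[OF x(1,2)]
    by (auto intro!: exI[of _ "\<lambda>j n. if n < j then x n else 0"])
qed

end

lemma l2_norm_commute: "l2_norm (x - y) = l2_norm (y - x)"
  unfolding l2_norm_def by (simp add: norm_minus_commute)

context opctx
begin

lemma Dm_cl: "x \<in> D0 \<Longrightarrow> x \<in> l2 \<and> A x \<in> l2"
  using D0_l2 D0_A by blast

lemma adj_prop:
  assumes y: "y \<in> l2" and z: "z \<in> l2"
  shows "(\<forall>x\<in>{x. x \<in> l2 \<and> A x \<in> l2}. l2_inner (A x) y = l2_inner x z) \<longleftrightarrow> (A y \<in> l2 \<and> z = A y)"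
proof
  assume h: "\<forall>x\<in>{x. x \<in> l2 \<and> A x \<in> l2}. l2_inner (A x) y = l2_inner x z"
  have "z = A y"
  proof (rule ext)
    fix n
    have "ev n \<in> D0" using sb_ev D0_sb by blast
    then have "l2_inner (A (ev n)) y = l2_inner (ev n) z" using h Dm_cl by blast
    then show "z n = A y n" using A_ev ip_ev by simp
  qed
  then show "A y \<in> l2 \<and> z = A y" using z by simp
next
  assume h: "A y \<in> l2 \<and> z = A y"
  show "\<forall>x\<in>{x. x \<in> l2 \<and> A x \<in> l2}. l2_inner (A x) y = l2_inner x z"
  proof
    fix x assume "x \<in> {x. x \<in> l2 \<and> A x \<in> l2}"
    then have x: "x \<in> l2" "A x \<in> l2" by auto
    define s where "s = (\<lambda>j n. if n < j then x n else 0)"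
    have sD: "s j \<in> D0" for j unfolding s_def by (rule trunc_D0)
    have t1: "(\<lambda>j. l2_inner (A (s j)) y) \<longlonglongrightarrow> l2_inner (A x) y"
      by (rule ip_cont1[OF _ x(2) y]) (use sD D0_l2 D0_A approx_A[OF x] s_def in auto)
    have t2: "(\<lambda>j. l2_inner (s j) (A y)) \<longlonglongrightarrow> l2_inner x (A y)"
      by (rule ip_cont1[OF _ x(1)]) (use sD D0_l2 h trunc_conv[OF x(1)] s_def in auto)
    have "(\<lambda>j. l2_inner (A (s j)) y) = (\<lambda>j. l2_inner (s j) (A y))" using sym_A'[OF sD] by simp
    then show "l2_inner (A x) y = l2_inner x z" using LIMSEQ_unique[OF t1] t2 h by simp
  qed
qed

lemma esa: "essentially_self_adjoint (A_op k l \<xi> f)"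
proof -
  define T where "T = A_op k l \<xi> f"
  define Dm where "Dm = {x. x \<in> l2 \<and> A x \<in> l2}"
  have cg: "(x, z) \<in> closure_graph T \<longleftrightarrow> x \<in> Dm \<and> z = A x" for x z
    unfolding T_def Dm_def using cg_char by auto
  have cl: "closable T" unfolding closable_def using cg by auto
  have fTc: "fst (op_closure T) = Dm" unfolding op_closure_def using cg by auto
  have sTc: "snd (op_closure T) x = A x" if "x \<in> Dm" for x
    unfolding op_closure_def using cg that by auto
  have dense: "dense_l2 Dm"
    unfolding dense_l2_def
  proof (intro conjI ballI allI impI)
    show "Dm \<subseteq> l2" unfolding Dm_def by auto
    fix x e assume x: "x \<in> l2" and e: "(e::real) > 0"
    have "(\<lambda>j. l2_norm ((\<lambda>n. if n < j then x n else 0) - x)) \<longlonglongrightarrow> 0"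
      using trunc_conv[OF x] unfolding l2_tendsto_def .
    from LIMSEQ_D[OF this e] obtain j where j: "norm (l2_norm ((\<lambda>n. if n < j then x n else 0) - x) - 0) < e" by auto
    have "(\<lambda>n. if n < j then x n else 0) \<in> Dm" unfolding Dm_def using Dm_cl[OF trunc_D0] by simp
    moreover have "l2_norm (x - (\<lambda>n. if n < j then x n else 0)) < e" using j l2_norm_commute by (simp add: abs_less_iff)
    ultimately show "\<exists>y\<in>Dm. l2_norm (x - y) < e" by blast
  qed
  have adjD: "fst (Defs.adjoint (op_closure T)) = Dm"
  proof -
    have "fst (Defs.adjoint (op_closure T)) = {y \<in> l2. \<exists>z\<in>l2. \<forall>x\<in>Dm. l2_inner (A x) y = l2_inner x z}"
      unfolding Defs.adjoint_def fTc using sTc by auto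
    also have "\<dots> = Dm"
      using adj_prop unfolding Dm_def by auto
    finally show ?thesis .
  qed
  have adjS: "snd (Defs.adjoint (op_closure T)) y = A y" if y: "y \<in> Dm" for y
  proof -
    have "snd (Defs.adjoint (op_closure T)) y = (THE z. z \<in> l2 \<and> (\<forall>x\<in>Dm. l2_inner (A x) y = l2_inner x z))"
      unfolding Defs.adjoint_def fTc using sTc by (simp cong: conj_cong ball_cong)
    also have "\<dots> = A y"
    proof (rule the_equality)
      show "A y \<in> l2 \<and> (\<forall>x\<in>Dm. l2_inner (A x) y = l2_inner x (A y))"
        using y adj_prop[of y "A y"] unfolding Dm_def by auto
      fix z assume "z \<in> l2 \<and> (\<forall>x\<in>Dm. l2_inner (A x) y = l2_inner x z)"
      then show "z = A y" using y adj_prop[of y z] unfolding Dm_def by auto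
    qed
    finally show ?thesis .
  qed
  have "self_adjoint (op_closure T)"
    unfolding self_adjoint_def op_eq_def using dense fTc adjD adjS sTc by auto
  then show ?thesis unfolding essentially_self_adjoint_def T_def using cl T_def by simp
qed

end

context opctx
begin

lemma re_bound:
  assumes x: "sb x N"
  shows "Re (l2_inner x (A x)) \<ge> - lam * (l2_norm x)\<^sup>2"
proof -
  define a where "a = (\<lambda>n. cmod (x n))"
  define h where "h = (\<lambda>m. (f m + lam) * (a m)\<^sup>2)"
  define E where "E = (\<Sum>n<N. h n)"
  have a0: "a n \<ge> 0" for n unfolding a_def by simp
  have h0: "h m \<ge> 0" for m unfolding h_def using fpos[of m] by simp
  have xz: "n \<ge> N \<Longrightarrow> x n = 0" for n using x unfolding sb_def by auto
  have pw: "Re (cnj (x n) * A x n) \<ge> f n * (a n)\<^sup>2 - cmod \<xi> * alp k l n * (a n * a (n - dd)) - cmod \<xi> * bet k l n * (a n * a (n + dd))" for n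
  proof -
    define t1 where "t1 = cnj (x n) * (\<xi> * of_real (alp k l n) * x (n - dd))"
    define t2 where "t2 = cnj (x n) * (cnj \<xi> * of_real (bet k l n) * x (n + dd))"
    have sq: "cnj (x n) * x n = of_real ((a n)\<^sup>2)" unfolding a_def using complex_norm_square[of "x n"] by (simp add: mult.commute)
    have e: "cnj (x n) * A x n = t1 + t2 + of_real (f n) * (cnj (x n) * x n)"
      unfolding t1_def t2_def Af_def by (simp add: algebra_simps)
    have r3: "Re (of_real (f n) * (cnj (x n) * x n)) = f n * (a n)\<^sup>2" unfolding sq by simp
    have c1: "cmod t1 = cmod \<xi> * alp k l n * (a n * a (n - dd))"
      unfolding t1_def a_def using alp_nonneg[of k l n] by (simp add: norm_mult)
    have c2: "cmod t2 = cmod \<xi> * bet k l n * (a n * a (n + dd))"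
      unfolding t2_def a_def using bet_nonneg[of k l n] by (simp add: norm_mult)
    have "Re t1 \<ge> - cmod t1" "Re t2 \<ge> - cmod t2" using abs_Re_le_cmod[of t1] abs_Re_le_cmod[of t2] by auto
    moreover have "Re (cnj (x n) * A x n) = Re t1 + Re t2 + f n * (a n)\<^sup>2"
      unfolding e r3[symmetric] by (simp only: plus_complex.sel)
    ultimately show ?thesis using c1 c2 by linarith
  qed
  have amgm: "c * (u * v) \<le> (c * u\<^sup>2 + c * v\<^sup>2) / 2" if "c \<ge> 0" for c u v :: real
  proof -
    have "2 * (u * v) \<le> u\<^sup>2 + v\<^sup>2" using sum_squares_bound[of u v] by (simp add: mult.assoc)
    then have "c * (2 * (u * v)) \<le> c * (u\<^sup>2 + v\<^sup>2)" using that by (rule mult_left_mono)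
    then show ?thesis by (simp add: algebra_simps)
  qed
  have S1: "(\<Sum>n<N. cmod \<xi> * alp k l n * (a n * a (n - dd))) \<le> th * E"
  proof -
    have "(\<Sum>n<N. cmod \<xi> * alp k l n * (a n * a (n - dd))) \<le>
      (\<Sum>n<N. (th * h n + th * (if dd \<le> n then h (n - dd) else 0)) / 2)"
    proof (rule sum_mono)
      fix n
      have c0: "cmod \<xi> * alp k l n \<ge> 0" using alp_nonneg[of k l n] by simp
      have u: "cmod \<xi> * alp k l n * (a n)\<^sup>2 \<le> th * h n"
        using mult_right_mono[OF ba[of n] zero_le_power2[of "a n"]] unfolding h_def by (simp add: mult.assoc)
      have v: "cmod \<xi> * alp k l n * (a (n - dd))\<^sup>2 \<le> th * (if dd \<le> n then h (n - dd) else 0)"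
      proof (cases "dd \<le> n")
        case True
        then have "alp k l n = bet k l (n - dd)" using alp_sh[of "n - dd"] by simp
        then have "cmod \<xi> * alp k l n \<le> th * (f (n - dd) + lam)" using bb[of "n - dd"] by simp
        from mult_right_mono[OF this zero_le_power2[of "a (n - dd)"]]
        show ?thesis using True unfolding h_def by (simp add: mult.assoc)
      qed (simp add: alp_sm)
      show "cmod \<xi> * alp k l n * (a n * a (n - dd)) \<le> (th * h n + th * (if dd \<le> n then h (n - dd) else 0)) / 2"
        using amgm[OF c0, of "a n" "a (n - dd)"] u v by simp
    qed
    also have "\<dots> = (th * (\<Sum>n<N. h n) + th * (\<Sum>n<N. (if dd \<le> n then h (n - dd) else 0))) / 2"
      by (simp add: sum.distrib sum_distrib_left sum_divide_distrib[symmetric])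
    also have "\<dots> \<le> (th * E + th * E) / 2"
      unfolding E_def using sum_shift_pos_le[where h=h and R=N and d=dd] h0 th0
      by (intro divide_right_mono add_mono mult_left_mono) auto
    finally show ?thesis by (simp add: mult.commute)
  qed
  have S2: "(\<Sum>n<N. cmod \<xi> * bet k l n * (a n * a (n + dd))) \<le> th * E"
  proof -
    have "(\<Sum>n<N. cmod \<xi> * bet k l n * (a n * a (n + dd))) \<le> (\<Sum>n<N. (th * h n + th * h (n + dd)) / 2)"
    proof (rule sum_mono)
      fix n
      have c0: "cmod \<xi> * bet k l n \<ge> 0" using bet_nonneg[of k l n] by simp
      have u: "cmod \<xi> * bet k l n * (a n)\<^sup>2 \<le> th * h n"
        using mult_right_mono[OF bb[of n] zero_le_power2[of "a n"]] unfolding h_def by (simp add: mult.assoc)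
      have "cmod \<xi> * bet k l n \<le> th * (f (n + dd) + lam)" using ba[of "n + dd"] alp_sh[of n] by simp
      from mult_right_mono[OF this zero_le_power2[of "a (n + dd)"]]
      have v: "cmod \<xi> * bet k l n * (a (n + dd))\<^sup>2 \<le> th * h (n + dd)"
        unfolding h_def by (simp add: mult.assoc)
      show "cmod \<xi> * bet k l n * (a n * a (n + dd)) \<le> (th * h n + th * h (n + dd)) / 2"
        using amgm[OF c0, of "a n" "a (n + dd)"] u v by simp
    qed
    also have "\<dots> = (th * (\<Sum>n<N. h n) + th * (\<Sum>n<N. h (n + dd))) / 2"
      by (simp add: sum.distrib sum_distrib_left sum_divide_distrib[symmetric])
    also have "\<dots> \<le> (th * E + th * E) / 2"
    proof -
      have "(\<Sum>n<N. h (n + dd)) \<le> (\<Sum>m<N + dd. h m)" by (rule sum_shift_neg_le[OF h0])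
      also have "\<dots> = E" unfolding E_def by (rule sum_trunc) (auto simp: h_def a_def xz)
      finally show ?thesis unfolding E_def using th0 by (intro divide_right_mono add_mono mult_left_mono) auto
    qed
    finally show ?thesis by (simp add: mult.commute)
  qed
  have w: "l2_inner x (A x) = (\<Sum>n<N. cnj (x n) * A x n)" by (rule ip_sb[OF x])
  have "Re (l2_inner x (A x)) = (\<Sum>n<N. Re (cnj (x n) * A x n))" unfolding w by (simp add: Re_sum)
  also have "\<dots> \<ge> (\<Sum>n<N. f n * (a n)\<^sup>2 - cmod \<xi> * alp k l n * (a n * a (n - dd)) - cmod \<xi> * bet k l n * (a n * a (n + dd)))"
    by (rule sum_mono[OF pw])
  finally have "Re (l2_inner x (A x)) \<ge> (\<Sum>n<N. f n * (a n)\<^sup>2) - th * E - th * E"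
    using S1 S2 unfolding sum_subtractf by linarith
  moreover have "th * E + th * E \<le> E"
  proof -
    have E0: "E \<ge> 0" unfolding E_def by (simp add: sum_nonneg h0)
    have "(2 * th) * E \<le> 1 * E" using th2 E0 by (intro mult_right_mono) auto
    then show ?thesis by (simp add: algebra_simps)
  qed
  moreover have "E = (\<Sum>n<N. f n * (a n)\<^sup>2) + lam * (\<Sum>n<N. (a n)\<^sup>2)"
    unfolding E_def h_def by (simp add: sum.distrib sum_distrib_left algebra_simps)
  moreover have "(l2_norm x)\<^sup>2 = (\<Sum>n<N. (a n)\<^sup>2)"
    unfolding norm_sb[OF x] L2_set_def a_def by (simp add: sum_nonneg)
  ultimately show ?thesis by (simp add: algebra_simps)
qed

lemma bbelow: "bounded_below (A_op k l \<xi> f)"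
  unfolding bounded_below_def A_op_eq[OF kl]
proof (intro exI ballI conjI)
  fix x assume "x \<in> D0"
  then obtain N where x: "sb x N" using D0_sb by blast
  have s1: "l2_inner (A x) x = l2_inner x (A x)" by (rule sym_A[OF x])
  have s2: "l2_inner (A x) x = cnj (l2_inner x (A x))"
    by (rule ip_conj[OF sb_A[OF x] sb_mono[OF x]]) simp
  show "l2_inner x (A x) \<in> \<real>" unfolding Reals_cnj_iff using s1 s2 by simp
  show "Re (l2_inner x (A x)) \<ge> (- lam) * (l2_norm x)\<^sup>2" using re_bound[OF x] by simp
qed

end

theorem corollary3p6:
  fixes k l N :: nat and \<xi> :: complex and f :: "nat \<Rightarrow> real" and \<kappa> :: real
  assumes "k > l"
    and "\<And>n. f n \<ge> 0"
    and "\<kappa> > 2"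
    and "\<And>n. n \<ge> N \<Longrightarrow> f n \<ge> \<kappa> * cmod \<xi> * real n powr ((real k + real l) / 2)"
  shows "essentially_self_adjoint (A_op k l \<xi> f) \<and> bounded_below (A_op k l \<xi> f)"
proof -
  obtain lam th where "opctx k l \<xi> f lam th" using opctx_exists[OF assms] by blast
  then interpret opctx k l \<xi> f lam th .
  show ?thesis using esa bbelow by simp
qed

end
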